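(* Let $\mathcal{D}=\{X_i:i\in I\}$ be a set of random variables on $\Omega$ containing all constant functions, and let $Q$ be a coherent$_1$ marginal prevision on $\mathcal{D}$. Let $\mathcal{L}$ be the set of all random variables $Y$ that can be written as $Y=\sum_{j=1}^n\alpha_jX_{i_j}$ with $X_{i_j}\in\mathcal{D}$, real $\alpha_j$, such that $p_Y=\sum_{j=1}^n\alpha_jQ(X_{i_j})$ is well defined. Then setting $P(Y)=p_Y$ for $Y\in\mathcal{L}$ is well defined (independent of the chosen representation of $Y$), and $P$ is the unique coherent$_1$ extension of $Q$ to $\mathcal{L}$.
   Context: Random variables are real-valued functions on a nonempty set $\Omega$; marginal previsions are extended real numbers. A sum of extended reals is well defined if it does not involve both $+\infty$ and $-\infty$ terms; the convention $0\times(\pm\infty)=0$ is used. Coherence$_1$ (marginal case): $\{P(X_i):i\in I\}$ is coherent$_1$ if for every finite $\{i_1,\dots,i_n\}\subseteq I$, all real $\alpha_1,\dots,\alpha_n$ with $\alpha_j\ge0$ whenever $P(X_{i_j})=+\infty$ and $\alpha_j\le0$ whenever $P(X_{i_j})=-\infty$, and all real $c_1,\dots,c_n$ with $c_j=P(X_{i_j})$ whenever it is finite, $\sup_\omega\sum_{j=1}^n\alpha_j[X_{i_j}(\omega)-c_j]\ge0$. *)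

theory Defs
  imports "HOL-Library.Extended_Real"
begin

text \<open>Random variables on the sample space (the type 'w, nonempty by HOL
convention) are real-valued functions. A set of random variables D together
with a function Q of type ('w \<Rightarrow> real) \<Rightarrow> ereal, considered only on D,
is a marginal prevision. Indexing by the variables themselves (a finite
subset S of D) plays the role of finite index sets.\<close>

definition coherent1 :: "('w \<Rightarrow> real) set \<Rightarrow> (('w \<Rightarrow> real) \<Rightarrow> ereal) \<Rightarrow> bool" where
  "coherent1 D P \<longleftrightarrow>
     (\<forall>S \<alpha> c. finite S \<and> S \<subseteq> D
        \<and> (\<forall>X\<in>S. P X = \<infinity> \<longrightarrow> \<alpha> X \<ge> 0)
        \<and> (\<forall>X\<in>S. P X = -\<infinity> \<longrightarrow> \<alpha> X \<le> 0)
        \<and> (\<forall>X\<in>S. \<bar>P X\<bar> \<noteq> \<infinity> \<longrightarrow> ereal (c X) = P X)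
        \<longrightarrow> (SUP \<omega>. ereal (\<Sum>X\<in>S. \<alpha> X * (X \<omega> - c X))) \<ge> 0)"

text \<open>Well-definedness of the extended-real sum of alpha(X) * Q(X) over S
(convention 0 * (+-infinity) = 0, as in ereal): no +infinity and -infinity
terms at the same time.\<close>

definition wd_sum :: "('w \<Rightarrow> real) set \<Rightarrow> (('w \<Rightarrow> real) \<Rightarrow> real) \<Rightarrow> (('w \<Rightarrow> real) \<Rightarrow> ereal) \<Rightarrow> bool" where
  "wd_sum S \<alpha> Q \<longleftrightarrow>
     \<not> ((\<exists>X\<in>S. ereal (\<alpha> X) * Q X = \<infinity>) \<and> (\<exists>X\<in>S. ereal (\<alpha> X) * Q X = -\<infinity>))"

definition lin_sum :: "('w \<Rightarrow> real) set \<Rightarrow> (('w \<Rightarrow> real) \<Rightarrow> real) \<Rightarrow> (('w \<Rightarrow> real) \<Rightarrow> ereal) \<Rightarrow> ereal" where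
  "lin_sum S \<alpha> Q = (\<Sum>X\<in>S. ereal (\<alpha> X) * Q X)"

definition is_rep :: "('w \<Rightarrow> real) set \<Rightarrow> (('w \<Rightarrow> real) \<Rightarrow> ereal) \<Rightarrow> ('w \<Rightarrow> real) \<Rightarrow> ('w \<Rightarrow> real) set \<Rightarrow> (('w \<Rightarrow> real) \<Rightarrow> real) \<Rightarrow> bool" where
  "is_rep D Q Y S \<alpha> \<longleftrightarrow> finite S \<and> S \<subseteq> D \<and> Y = (\<lambda>\<omega>. \<Sum>X\<in>S. \<alpha> X * X \<omega>) \<and> wd_sum S \<alpha> Q"

definition lin_dom :: "('w \<Rightarrow> real) set \<Rightarrow> (('w \<Rightarrow> real) \<Rightarrow> ereal) \<Rightarrow> ('w \<Rightarrow> real) set" where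
  "lin_dom D Q = {Y. \<exists>S \<alpha>. is_rep D Q Y S \<alpha>}"

end

theory Submission
  imports Defs
begin


lemma esum_minf:
  fixes f :: "'a \<Rightarrow> ereal"
  assumes "finite T" "\<forall>X\<in>T. f X \<noteq> \<infinity>" "X0 \<in> T" "f X0 = -\<infinity>"
  shows "sum f T = -\<infinity>"
  using assms
proof (induction T rule: finite_induct)
  case empty then show ?case by simp
next
  case (insert x A)
  have nA: "sum f A \<noteq> \<infinity>" using insert by (simp add: sum_Pinfty)
  show ?case
  proof (cases "x = X0")
    case True
    then show ?thesis using insert nA by (cases "sum f A") auto
  next
    case False
    then have "sum f A = -\<infinity>" using insert by auto
    then show ?thesis using insert by (cases "f x") auto
  qed
qed

lemma esum_cases:
  fixes f :: "'a \<Rightarrow> ereal"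
  assumes "finite T" "\<not> ((\<exists>X\<in>T. f X = \<infinity>) \<and> (\<exists>X\<in>T. f X = -\<infinity>))"
  shows "((\<exists>X\<in>T. f X = \<infinity>) \<and> sum f T = \<infinity>) \<or> ((\<exists>X\<in>T. f X = -\<infinity>) \<and> sum f T = -\<infinity>)
     \<or> ((\<forall>X\<in>T. \<bar>f X\<bar> \<noteq> \<infinity>) \<and> sum f T = ereal (\<Sum>X\<in>T. real_of_ereal (f X)))"
proof (cases "\<exists>X\<in>T. f X = \<infinity>")
  case True then show ?thesis using assms by (simp add: sum_Pinfty)
next
  case F1: False
  show ?thesis
  proof (cases "\<exists>X\<in>T. f X = -\<infinity>")
    case True then show ?thesis using F1 assms esum_minf[of T f] by blast
  next
    case False
    then have fin: "\<forall>X\<in>T. \<bar>f X\<bar> \<noteq> \<infinity>" using F1 by auto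
    have "sum f T = (\<Sum>X\<in>T. ereal (real_of_ereal (f X)))"
      by (rule sum.cong) (use fin ereal_real' in auto)
    then show ?thesis using fin by simp
  qed
qed



lemma L0:
  assumes coh: "coherent1 D' P" and T: "finite T" "T \<subseteq> D'"
    and z: "\<And>\<omega>. (\<Sum>X\<in>T. \<gamma> X * X \<omega>) = 0"
    and ap: "\<forall>X\<in>T. P X = \<infinity> \<longrightarrow> \<gamma> X \<ge> 0"
    and am: "\<forall>X\<in>T. P X = -\<infinity> \<longrightarrow> \<gamma> X \<le> 0"
    and c: "\<forall>X\<in>T. \<bar>P X\<bar> \<noteq> \<infinity> \<longrightarrow> ereal (c X) = P X"
  shows "(\<Sum>X\<in>T. \<gamma> X * c X) \<le> 0"
proof -
  have "(SUP \<omega>. ereal (\<Sum>X\<in>T. \<gamma> X * (X \<omega> - c X))) \<ge> 0"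
    using coh T ap am c unfolding coherent1_def by blast
  moreover have "\<And>\<omega>. (\<Sum>X\<in>T. \<gamma> X * (X \<omega> - c X)) = - (\<Sum>X\<in>T. \<gamma> X * c X)"
    using z by (simp add: right_diff_distrib sum_subtractf)
  ultimately show ?thesis by simp
qed

lemma L_inf:
  assumes coh: "coherent1 D' P" and T: "finite T" "T \<subseteq> D'"
    and z: "\<And>\<omega>. (\<Sum>X\<in>T. \<gamma> X * X \<omega>) = 0"
    and ap: "\<forall>X\<in>T. P X = \<infinity> \<longrightarrow> \<gamma> X \<ge> 0"
    and am: "\<forall>X\<in>T. P X = -\<infinity> \<longrightarrow> \<gamma> X \<le> 0"
    and X0: "X0 \<in> T" "\<gamma> X0 \<noteq> 0" "\<bar>P X0\<bar> = \<infinity>"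
  shows False
proof -
  define r where "r = (\<Sum>X\<in>T-{X0}. \<gamma> X * real_of_ereal (P X))"
  define c where "c = (\<lambda>X. if X = X0 then (1 - r) / \<gamma> X0 else real_of_ereal (P X))"
  have c: "\<forall>X\<in>T. \<bar>P X\<bar> \<noteq> \<infinity> \<longrightarrow> ereal (c X) = P X"
    using X0 by (auto simp: c_def ereal_real')
  have "(\<Sum>X\<in>T. \<gamma> X * c X) = \<gamma> X0 * c X0 + (\<Sum>X\<in>T-{X0}. \<gamma> X * c X)"
    using X0 T by (simp add: sum.remove)
  also have "(\<Sum>X\<in>T-{X0}. \<gamma> X * c X) = r"
    unfolding r_def by (rule sum.cong) (auto simp: c_def)
  also have "\<gamma> X0 * c X0 = 1 - r" using X0 by (simp add: c_def)
  finally have "(\<Sum>X\<in>T. \<gamma> X * c X) = 1" by simp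
  with L0[OF coh T z ap am c] show False by simp
qed

lemma L_eq:
  assumes coh: "coherent1 D' P" and T: "finite T" "T \<subseteq> D'"
    and z: "\<And>\<omega>. (\<Sum>X\<in>T. \<gamma> X * X \<omega>) = 0"
    and fin: "\<forall>X\<in>T. \<gamma> X \<noteq> 0 \<longrightarrow> \<bar>P X\<bar> \<noteq> \<infinity>"
  shows "(\<Sum>X\<in>T. \<gamma> X * real_of_ereal (P X)) = 0"
proof -
  have c: "\<forall>X\<in>T. \<bar>P X\<bar> \<noteq> \<infinity> \<longrightarrow> ereal (real_of_ereal (P X)) = P X"
    by (auto simp: ereal_real')
  have 1: "(\<Sum>X\<in>T. \<gamma> X * real_of_ereal (P X)) \<le> 0"
    by (rule L0[OF coh T z _ _ c]) (use fin in force)+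
  have z2: "\<And>\<omega>. (\<Sum>X\<in>T. (- \<gamma> X) * X \<omega>) = 0"
    using z by (simp add: sum_negf)
  have 2: "(\<Sum>X\<in>T. (- \<gamma> X) * real_of_ereal (P X)) \<le> 0"
    by (rule L0[OF coh T z2 _ _ c]) (use fin in force)+
  from 1 2 show ?thesis by (simp add: sum_negf)
qed



lemma lin_cases:
  assumes "finite S" "wd_sum S \<alpha> Q"
  shows "((\<exists>X\<in>S. ereal (\<alpha> X) * Q X = \<infinity>) \<and> lin_sum S \<alpha> Q = \<infinity>)
     \<or> ((\<exists>X\<in>S. ereal (\<alpha> X) * Q X = -\<infinity>) \<and> lin_sum S \<alpha> Q = -\<infinity>)
     \<or> ((\<forall>X\<in>S. \<bar>ereal (\<alpha> X) * Q X\<bar> \<noteq> \<infinity>) \<and> lin_sum S \<alpha> Q = ereal (\<Sum>X\<in>S. \<alpha> X * real_of_ereal (Q X)))"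
  using esum_cases[of S "\<lambda>X. ereal (\<alpha> X) * Q X"] assms unfolding wd_sum_def lin_sum_def
  by simp

lemma H1: "finite S \<Longrightarrow> wd_sum S \<alpha> Q \<Longrightarrow> X0 \<in> S \<Longrightarrow> ereal (\<alpha> X0) * Q X0 = \<infinity> \<Longrightarrow> lin_sum S \<alpha> Q = \<infinity>"
  using lin_cases[of S \<alpha> Q] unfolding wd_sum_def by force
lemma H2: "finite S \<Longrightarrow> wd_sum S \<alpha> Q \<Longrightarrow> X0 \<in> S \<Longrightarrow> ereal (\<alpha> X0) * Q X0 = -\<infinity> \<Longrightarrow> lin_sum S \<alpha> Q = -\<infinity>"
  using lin_cases[of S \<alpha> Q] unfolding wd_sum_def by force
lemma H3: "finite S \<Longrightarrow> wd_sum S \<alpha> Q \<Longrightarrow> lin_sum S \<alpha> Q = \<infinity> \<Longrightarrow> \<exists>X\<in>S. ereal (\<alpha> X) * Q X = \<infinity>"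
  using lin_cases[of S \<alpha> Q] by force
lemma H4: "finite S \<Longrightarrow> wd_sum S \<alpha> Q \<Longrightarrow> lin_sum S \<alpha> Q = -\<infinity> \<Longrightarrow> \<exists>X\<in>S. ereal (\<alpha> X) * Q X = -\<infinity>"
  using lin_cases[of S \<alpha> Q] by force
lemma H5: "finite S \<Longrightarrow> wd_sum S \<alpha> Q \<Longrightarrow> lin_sum S \<alpha> Q \<noteq> \<infinity> \<Longrightarrow> lin_sum S \<alpha> Q \<noteq> -\<infinity> \<Longrightarrow>
   (\<forall>X\<in>S. \<bar>ereal (\<alpha> X) * Q X\<bar> \<noteq> \<infinity>) \<and> lin_sum S \<alpha> Q = ereal (\<Sum>X\<in>S. \<alpha> X * real_of_ereal (Q X))"
  using lin_cases[of S \<alpha> Q] by force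



lemma ext_sum:
  assumes "finite T" "S \<subseteq> T"
  shows "(\<Sum>X\<in>S. f X) = (\<Sum>X\<in>T. if X \<in> S then f X else 0)"
proof -
  have "(\<Sum>X\<in>T. if X \<in> S then f X else 0) = sum f (T \<inter> S)"
    by (rule sum.inter_restrict[OF assms(1), symmetric])
  moreover have "T \<inter> S = S" using assms(2) by auto
  ultimately show ?thesis by simp
qed

lemma pinf_transfer:
  assumes coh: "coherent1 D Q"
    and r1: "is_rep D Q Y S1 \<alpha>1" and r2: "is_rep D Q Y S2 \<alpha>2"
    and L1: "lin_sum S1 \<alpha>1 Q = \<infinity>"
  shows "lin_sum S2 \<alpha>2 Q = \<infinity>"
proof (rule ccontr)
  assume L2: "lin_sum S2 \<alpha>2 Q \<noteq> \<infinity>"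
  have f1: "finite S1" "S1 \<subseteq> D" "Y = (\<lambda>\<omega>. \<Sum>X\<in>S1. \<alpha>1 X * X \<omega>)" "wd_sum S1 \<alpha>1 Q"
    using r1 by (auto simp: is_rep_def)
  have f2: "finite S2" "S2 \<subseteq> D" "Y = (\<lambda>\<omega>. \<Sum>X\<in>S2. \<alpha>2 X * X \<omega>)" "wd_sum S2 \<alpha>2 Q"
    using r2 by (auto simp: is_rep_def)
  obtain X0 where X0: "X0 \<in> S1" "ereal (\<alpha>1 X0) * Q X0 = \<infinity>"
    using L1 by (auto simp: lin_sum_def sum_Pinfty)
  have no1: "\<forall>X\<in>S1. ereal (\<alpha>1 X) * Q X \<noteq> -\<infinity>" using f1(4) X0 unfolding wd_sum_def by blast
  have no2: "\<forall>X\<in>S2. ereal (\<alpha>2 X) * Q X \<noteq> \<infinity>" using L2 f2(1) unfolding lin_sum_def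
    by (auto simp: sum_Pinfty)
  define T where "T = S1 \<union> S2"
  define \<beta> where "\<beta> = (\<lambda>X. (if X \<in> S1 then \<alpha>1 X else 0) - (if X \<in> S2 then \<alpha>2 X else 0))"
  have T: "finite T" "T \<subseteq> D" using f1 f2 by (auto simp: T_def)
  have z: "\<And>\<omega>. (\<Sum>X\<in>T. \<beta> X * X \<omega>) = 0"
  proof -
    fix \<omega>
    have "(\<Sum>X\<in>T. \<beta> X * X \<omega>) = (\<Sum>X\<in>T. (if X \<in> S1 then \<alpha>1 X * X \<omega> else 0))
        - (\<Sum>X\<in>T. (if X \<in> S2 then \<alpha>2 X * X \<omega> else 0))"
      by (subst sum_subtractf[symmetric], rule sum.cong) (auto simp: \<beta>_def left_diff_distrib)
    also have "\<dots> = Y \<omega> - Y \<omega>"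
    proof -
      have e1: "(\<Sum>X\<in>T. (if X \<in> S1 then \<alpha>1 X * X \<omega> else 0)) = Y \<omega>"
        using ext_sum[of T S1 "\<lambda>X. \<alpha>1 X * X \<omega>"] f1 T by (simp add: T_def)
      have e2: "(\<Sum>X\<in>T. (if X \<in> S2 then \<alpha>2 X * X \<omega> else 0)) = Y \<omega>"
        using ext_sum[of T S2 "\<lambda>X. \<alpha>2 X * X \<omega>"] f2 T by (simp add: T_def)
      show ?thesis using e1 e2 by simp
    qed
    finally show "(\<Sum>X\<in>T. \<beta> X * X \<omega>) = 0" by simp
  qed
  have ap: "\<forall>X\<in>T. Q X = \<infinity> \<longrightarrow> \<beta> X \<ge> 0"
  proof (intro ballI impI)
    fix X assume "X \<in> T" "Q X = \<infinity>"
    then show "\<beta> X \<ge> 0" using no1 no2 unfolding \<beta>_def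
      by (auto simp: not_less[symmetric])
  qed
  have am: "\<forall>X\<in>T. Q X = -\<infinity> \<longrightarrow> \<beta> X \<le> 0"
  proof (intro ballI impI)
    fix X assume "X \<in> T" "Q X = -\<infinity>"
    then show "\<beta> X \<le> 0" using no1 no2 unfolding \<beta>_def
      by (auto simp: not_less[symmetric])
  qed
  have "\<beta> X0 \<noteq> 0" "\<bar>Q X0\<bar> = \<infinity>"
    using X0 no2 unfolding \<beta>_def by (auto simp: not_less[symmetric])
  then show False using L_inf[OF coh T z ap am, of X0] X0 by (auto simp: T_def)
qed

lemma minf_transfer:
  assumes coh: "coherent1 D Q"
    and r1: "is_rep D Q Y S1 \<alpha>1" and r2: "is_rep D Q Y S2 \<alpha>2"
    and L1: "lin_sum S1 \<alpha>1 Q = -\<infinity>"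
  shows "lin_sum S2 \<alpha>2 Q = -\<infinity>"
proof (rule ccontr)
  assume L2: "lin_sum S2 \<alpha>2 Q \<noteq> -\<infinity>"
  have f1: "finite S1" "S1 \<subseteq> D" "Y = (\<lambda>\<omega>. \<Sum>X\<in>S1. \<alpha>1 X * X \<omega>)" "wd_sum S1 \<alpha>1 Q"
    using r1 by (auto simp: is_rep_def)
  have f2: "finite S2" "S2 \<subseteq> D" "Y = (\<lambda>\<omega>. \<Sum>X\<in>S2. \<alpha>2 X * X \<omega>)" "wd_sum S2 \<alpha>2 Q"
    using r2 by (auto simp: is_rep_def)
  obtain X0 where X0: "X0 \<in> S1" "ereal (\<alpha>1 X0) * Q X0 = -\<infinity>"
    using H4[OF f1(1) f1(4) L1] by blast
  have no1: "\<forall>X\<in>S1. ereal (\<alpha>1 X) * Q X \<noteq> \<infinity>" using f1(4) X0 unfolding wd_sum_def by blast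
  have no2: "\<forall>X\<in>S2. ereal (\<alpha>2 X) * Q X \<noteq> -\<infinity>" using L2 H2[OF f2(1) f2(4)] by blast
  define T where "T = S1 \<union> S2"
  define \<beta> where "\<beta> = (\<lambda>X. (if X \<in> S2 then \<alpha>2 X else 0) - (if X \<in> S1 then \<alpha>1 X else 0))"
  have T: "finite T" "T \<subseteq> D" using f1 f2 by (auto simp: T_def)
  have z: "\<And>\<omega>. (\<Sum>X\<in>T. \<beta> X * X \<omega>) = 0"
  proof -
    fix \<omega>
    have "(\<Sum>X\<in>T. \<beta> X * X \<omega>) = (\<Sum>X\<in>T. (if X \<in> S2 then \<alpha>2 X * X \<omega> else 0))
        - (\<Sum>X\<in>T. (if X \<in> S1 then \<alpha>1 X * X \<omega> else 0))"
      by (subst sum_subtractf[symmetric], rule sum.cong) (auto simp: \<beta>_def left_diff_distrib)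
    also have "\<dots> = Y \<omega> - Y \<omega>"
    proof -
      have e1: "(\<Sum>X\<in>T. (if X \<in> S1 then \<alpha>1 X * X \<omega> else 0)) = Y \<omega>"
        using ext_sum[of T S1 "\<lambda>X. \<alpha>1 X * X \<omega>"] f1 T by (simp add: T_def)
      have e2: "(\<Sum>X\<in>T. (if X \<in> S2 then \<alpha>2 X * X \<omega> else 0)) = Y \<omega>"
        using ext_sum[of T S2 "\<lambda>X. \<alpha>2 X * X \<omega>"] f2 T by (simp add: T_def)
      show ?thesis using e1 e2 by simp
    qed
    finally show "(\<Sum>X\<in>T. \<beta> X * X \<omega>) = 0" by simp
  qed
  have ap: "\<forall>X\<in>T. Q X = \<infinity> \<longrightarrow> \<beta> X \<ge> 0"
  proof (intro ballI impI)
    fix X assume "X \<in> T" "Q X = \<infinity>"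
    then show "\<beta> X \<ge> 0" using no1 no2 unfolding \<beta>_def
      by (auto simp: not_less[symmetric])
  qed
  have am: "\<forall>X\<in>T. Q X = -\<infinity> \<longrightarrow> \<beta> X \<le> 0"
  proof (intro ballI impI)
    fix X assume "X \<in> T" "Q X = -\<infinity>"
    then show "\<beta> X \<le> 0" using no1 no2 unfolding \<beta>_def
      by (auto simp: not_less[symmetric])
  qed
  have "\<beta> X0 \<noteq> 0" "\<bar>Q X0\<bar> = \<infinity>"
    using X0 no2 unfolding \<beta>_def by (auto simp: not_less[symmetric])
  then show False using L_inf[OF coh T z ap am, of X0] X0 by (auto simp: T_def)
qed

lemma fin_coef:
  assumes "\<bar>ereal a * q\<bar> \<noteq> \<infinity>" "\<bar>q\<bar> = \<infinity>"
  shows "a = 0"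
proof (rule ccontr)
  assume "a \<noteq> 0"
  then have "a > 0 \<or> a < 0" by auto
  then show False using assms by (cases q) auto
qed

lemma wd_main:
  assumes coh: "coherent1 D Q"
    and r1: "is_rep D Q Y S1 \<alpha>1" and r2: "is_rep D Q Y S2 \<alpha>2"
  shows "lin_sum S1 \<alpha>1 Q = lin_sum S2 \<alpha>2 Q"
proof -
  have f1: "finite S1" "S1 \<subseteq> D" "Y = (\<lambda>\<omega>. \<Sum>X\<in>S1. \<alpha>1 X * X \<omega>)" "wd_sum S1 \<alpha>1 Q"
    using r1 by (auto simp: is_rep_def)
  have f2: "finite S2" "S2 \<subseteq> D" "Y = (\<lambda>\<omega>. \<Sum>X\<in>S2. \<alpha>2 X * X \<omega>)" "wd_sum S2 \<alpha>2 Q"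
    using r2 by (auto simp: is_rep_def)
  consider "lin_sum S1 \<alpha>1 Q = \<infinity>" | "lin_sum S1 \<alpha>1 Q = -\<infinity>"
    | "lin_sum S1 \<alpha>1 Q \<noteq> \<infinity>" "lin_sum S1 \<alpha>1 Q \<noteq> -\<infinity>" by blast
  then show ?thesis
  proof cases
    case 1 then show ?thesis using pinf_transfer[OF coh r1 r2] by simp
  next
    case 2 then show ?thesis using minf_transfer[OF coh r1 r2] by simp
  next
    case 3
    have n2: "lin_sum S2 \<alpha>2 Q \<noteq> \<infinity>" "lin_sum S2 \<alpha>2 Q \<noteq> -\<infinity>"
      using 3 pinf_transfer[OF coh r2 r1] minf_transfer[OF coh r2 r1] by auto
    note A = H5[OF f1(1) f1(4) 3]
    note B = H5[OF f2(1) f2(4) n2]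
    define T where "T = S1 \<union> S2"
    define a1 where "a1 = (\<lambda>X. if X \<in> S1 then \<alpha>1 X else 0)"
    define a2 where "a2 = (\<lambda>X. if X \<in> S2 then \<alpha>2 X else 0)"
    define \<beta> where "\<beta> = (\<lambda>X. a1 X - a2 X)"
    have T: "finite T" "T \<subseteq> D" using f1 f2 by (auto simp: T_def)
    have e: "\<And>S \<alpha>' (g :: ('a \<Rightarrow> real) \<Rightarrow> real). S \<subseteq> T \<Longrightarrow> (\<Sum>X\<in>S. \<alpha>' X * g X) = (\<Sum>X\<in>T. (if X \<in> S then \<alpha>' X else 0) * g X)"
    proof -
      fix S \<alpha>' and g :: "('a \<Rightarrow> real) \<Rightarrow> real" assume "S \<subseteq> T"
      then show "(\<Sum>X\<in>S. \<alpha>' X * g X) = (\<Sum>X\<in>T. (if X \<in> S then \<alpha>' X else 0) * g X)"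
      proof -
        have "(\<Sum>X\<in>T. (if X \<in> S then \<alpha>' X else 0) * g X) = (\<Sum>X\<in>T. if X \<in> S then \<alpha>' X * g X else 0)"
          by (rule sum.cong) auto
        then show ?thesis using ext_sum[OF T(1) \<open>S \<subseteq> T\<close>, of "\<lambda>X. \<alpha>' X * g X"] by simp
      qed
    qed
    have z: "\<And>\<omega>. (\<Sum>X\<in>T. \<beta> X * X \<omega>) = 0"
    proof -
      fix \<omega>
      have "Y \<omega> = (\<Sum>X\<in>T. a1 X * X \<omega>)" using e[of S1 \<alpha>1 "\<lambda>X. X \<omega>"] f1(3) by (simp add: T_def a1_def)
      moreover have "Y \<omega> = (\<Sum>X\<in>T. a2 X * X \<omega>)" using e[of S2 \<alpha>2 "\<lambda>X. X \<omega>"] f2(3) by (simp add: T_def a2_def)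
      ultimately show "(\<Sum>X\<in>T. \<beta> X * X \<omega>) = 0"
        by (simp add: \<beta>_def left_diff_distrib sum_subtractf)
    qed
    have fin: "\<forall>X\<in>T. \<beta> X \<noteq> 0 \<longrightarrow> \<bar>Q X\<bar> \<noteq> \<infinity>"
    proof (intro ballI impI)
      fix X assume X: "X \<in> T" "\<beta> X \<noteq> 0"
      show "\<bar>Q X\<bar> \<noteq> \<infinity>"
      proof
        assume inf: "\<bar>Q X\<bar> = \<infinity>"
        have "a1 X = 0" using A inf fin_coef[of "\<alpha>1 X" "Q X"] unfolding a1_def by (cases "X \<in> S1") auto
        moreover have "a2 X = 0" using B inf fin_coef[of "\<alpha>2 X" "Q X"] unfolding a2_def by (cases "X \<in> S2") auto
        ultimately show False using X by (simp add: \<beta>_def)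
      qed
    qed
    have eq: "(\<Sum>X\<in>T. \<beta> X * real_of_ereal (Q X)) = 0" by (rule L_eq[OF coh T z fin])
    have "lin_sum S1 \<alpha>1 Q = ereal (\<Sum>X\<in>T. a1 X * real_of_ereal (Q X))"
      using A e[of S1 \<alpha>1 "\<lambda>X. real_of_ereal (Q X)"] by (simp add: T_def a1_def)
    moreover have "lin_sum S2 \<alpha>2 Q = ereal (\<Sum>X\<in>T. a2 X * real_of_ereal (Q X))"
      using B e[of S2 \<alpha>2 "\<lambda>X. real_of_ereal (Q X)"] by (simp add: T_def a2_def)
    ultimately show ?thesis using eq by (simp add: \<beta>_def left_diff_distrib sum_subtractf)
  qed
qed



lemma D_sub: "D \<subseteq> lin_dom D Q"
proof
  fix X assume "X \<in> D"
  then have "is_rep D Q X {X} (\<lambda>_. 1)" by (auto simp: is_rep_def wd_sum_def)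
  then show "X \<in> lin_dom D Q" by (auto simp: lin_dom_def)
qed

lemma unique_main:
  assumes cohP: "coherent1 (lin_dom D Q) P'" and agree: "\<forall>X\<in>D. P' X = Q X"
    and rep: "is_rep D Q Y S \<alpha>"
  shows "P' Y = lin_sum S \<alpha> Q"
proof -
  have f: "finite S" "S \<subseteq> D" "Y = (\<lambda>\<omega>. \<Sum>X\<in>S. \<alpha> X * X \<omega>)" "wd_sum S \<alpha> Q"
    using rep by (auto simp: is_rep_def)
  have YL: "Y \<in> lin_dom D Q" using rep by (auto simp: lin_dom_def)
  define T where "T = insert Y S"
  define a where "a = (\<lambda>X. if X \<in> S then \<alpha> X else 0)"
  define \<gamma> where "\<gamma> = (\<lambda>X. a X - (if X = Y then 1 else 0))"
  define \<gamma>' where "\<gamma>' = (\<lambda>X. - \<gamma> X)"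
  have T: "finite T" "T \<subseteq> lin_dom D Q" using f YL D_sub[of D Q] by (auto simp: T_def)
  have PS: "\<forall>X\<in>S. P' X = Q X" using f agree by auto
  have z: "\<And>\<omega>. (\<Sum>X\<in>T. \<gamma> X * X \<omega>) = 0"
  proof -
    fix \<omega>
    have "(\<Sum>X\<in>T. \<gamma> X * X \<omega>) = (\<Sum>X\<in>T. if X \<in> S then \<alpha> X * X \<omega> else 0) - (\<Sum>X\<in>T. if X = Y then X \<omega> else 0)"
      by (subst sum_subtractf[symmetric], rule sum.cong) (auto simp: \<gamma>_def a_def left_diff_distrib)
    also have "(\<Sum>X\<in>T. if X \<in> S then \<alpha> X * X \<omega> else 0) = Y \<omega>"
    proof -
      have SS: "S \<subseteq> T" by (auto simp: T_def)
      have "Y \<omega> = (\<Sum>X\<in>S. \<alpha> X * X \<omega>)" using f(3) by simp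
      then show ?thesis using ext_sum[OF T(1) SS, of "\<lambda>X. \<alpha> X * X \<omega>"] by simp
    qed
    also have "(\<Sum>X\<in>T. if X = Y then X \<omega> else 0) = Y \<omega>"
      using T(1) by (simp add: T_def)
    finally show "(\<Sum>X\<in>T. \<gamma> X * X \<omega>) = 0" by simp
  qed
  have z': "\<And>\<omega>. (\<Sum>X\<in>T. \<gamma>' X * X \<omega>) = 0"
    using z by (simp add: \<gamma>'_def sum_negf)
  consider "lin_sum S \<alpha> Q = \<infinity>" | "lin_sum S \<alpha> Q = -\<infinity>"
    | "lin_sum S \<alpha> Q \<noteq> \<infinity>" "lin_sum S \<alpha> Q \<noteq> -\<infinity>" by blast
  then show ?thesis
  proof cases
    case 1
    obtain X0 where X0: "X0 \<in> S" "ereal (\<alpha> X0) * Q X0 = \<infinity>" using H3[OF f(1) f(4) 1] by blast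
    have no: "\<forall>X\<in>S. ereal (\<alpha> X) * Q X \<noteq> -\<infinity>" using f(4) X0 unfolding wd_sum_def by blast
    show ?thesis
    proof (rule ccontr)
      assume ne: "P' Y \<noteq> lin_sum S \<alpha> Q"
      then have ne': "P' Y \<noteq> \<infinity>" using 1 by simp
      have ap: "\<forall>X\<in>T. P' X = \<infinity> \<longrightarrow> \<gamma> X \<ge> 0"
      proof (intro ballI impI)
        fix X assume X: "X \<in> T" "P' X = \<infinity>"
        then have "X \<noteq> Y" "X \<in> S" using ne' by (auto simp: T_def)
        then show "\<gamma> X \<ge> 0" using X PS no by (force simp: \<gamma>_def a_def not_less[symmetric])
      qed
      have am: "\<forall>X\<in>T. P' X = -\<infinity> \<longrightarrow> \<gamma> X \<le> 0"
      proof (intro ballI impI)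
        fix X assume X: "X \<in> T" "P' X = -\<infinity>"
        show "\<gamma> X \<le> 0"
        proof (cases "X \<in> S")
          case True
          then have "\<alpha> X \<le> 0" using X PS no by (force simp: not_less[symmetric])
          then show ?thesis using True by (auto simp: \<gamma>_def a_def)
        next
          case False
          then show ?thesis by (simp add: \<gamma>_def a_def)
        qed
      qed
      have g0: "\<gamma> X0 \<noteq> 0" "\<bar>P' X0\<bar> = \<infinity>"
      proof -
        have q: "\<bar>Q X0\<bar> = \<infinity>" "\<alpha> X0 \<noteq> 0" using X0 by auto
        show "\<bar>P' X0\<bar> = \<infinity>" using q PS X0 by simp
        show "\<gamma> X0 \<noteq> 0"
        proof (cases "X0 = Y")
          case True
          then have "Q X0 = -\<infinity>" "\<alpha> X0 < 0" using X0 PS ne' by auto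
          then show ?thesis using True X0 by (simp add: \<gamma>_def a_def)
        next
          case False
          then show ?thesis using q X0 by (simp add: \<gamma>_def a_def)
        qed
      qed
      show False using L_inf[OF cohP T z ap am _ g0] X0 by (simp add: T_def)
    qed
  next
    case 2
    obtain X0 where X0: "X0 \<in> S" "ereal (\<alpha> X0) * Q X0 = -\<infinity>" using H4[OF f(1) f(4) 2] by blast
    have no: "\<forall>X\<in>S. ereal (\<alpha> X) * Q X \<noteq> \<infinity>" using f(4) X0 unfolding wd_sum_def by blast
    show ?thesis
    proof (rule ccontr)
      assume ne: "P' Y \<noteq> lin_sum S \<alpha> Q"
      then have ne': "P' Y \<noteq> -\<infinity>" using 2 by simp
      have ap: "\<forall>X\<in>T. P' X = \<infinity> \<longrightarrow> \<gamma>' X \<ge> 0"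
      proof (intro ballI impI)
        fix X assume X: "X \<in> T" "P' X = \<infinity>"
        show "\<gamma>' X \<ge> 0"
        proof (cases "X \<in> S")
          case True
          then have "\<alpha> X \<le> 0" using X PS no by (force simp: not_less[symmetric])
          then show ?thesis using True by (auto simp: \<gamma>'_def \<gamma>_def a_def)
        next
          case False
          then show ?thesis by (simp add: \<gamma>'_def \<gamma>_def a_def)
        qed
      qed
      have am: "\<forall>X\<in>T. P' X = -\<infinity> \<longrightarrow> \<gamma>' X \<le> 0"
      proof (intro ballI impI)
        fix X assume X: "X \<in> T" "P' X = -\<infinity>"
        then have "X \<noteq> Y" "X \<in> S" using ne' by (auto simp: T_def)
        then show "\<gamma>' X \<le> 0" using X PS no by (force simp: \<gamma>'_def \<gamma>_def a_def not_less[symmetric])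
      qed
      have g0: "\<gamma>' X0 \<noteq> 0" "\<bar>P' X0\<bar> = \<infinity>"
      proof -
        have q: "\<bar>Q X0\<bar> = \<infinity>" "\<alpha> X0 \<noteq> 0" using X0 by auto
        show "\<bar>P' X0\<bar> = \<infinity>" using q PS X0 by simp
        show "\<gamma>' X0 \<noteq> 0"
        proof (cases "X0 = Y")
          case True
          then have "Q X0 = \<infinity>" "\<alpha> X0 < 0" using X0 PS ne' by auto
          then show ?thesis using True X0 by (simp add: \<gamma>'_def \<gamma>_def a_def)
        next
          case False
          then show ?thesis using q X0 by (simp add: \<gamma>'_def \<gamma>_def a_def)
        qed
      qed
      show False using L_inf[OF cohP T z' ap am _ g0] X0 by (simp add: T_def)
    qed
  next
    case 3
    note H = H5[OF f(1) f(4) 3]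
    have a0: "\<And>X. X \<in> S \<Longrightarrow> \<bar>Q X\<bar> = \<infinity> \<Longrightarrow> \<alpha> X = 0"
      using H fin_coef by (meson)
    have aY: "\<bar>P' Y\<bar> = \<infinity> \<Longrightarrow> a Y = 0"
      using a0 PS by (auto simp: a_def)
    have finY: "\<bar>P' Y\<bar> \<noteq> \<infinity>"
    proof
      assume inf: "\<bar>P' Y\<bar> = \<infinity>"
      have aY0: "a Y = 0" using aY inf .
      have other: "\<And>X. X \<in> T \<Longrightarrow> X \<noteq> Y \<Longrightarrow> \<bar>P' X\<bar> = \<infinity> \<Longrightarrow> \<gamma> X = 0"
        using a0 PS by (auto simp: T_def \<gamma>_def a_def)
      show False
      proof (cases "P' Y = \<infinity>")
        case True
        have ap: "\<forall>X\<in>T. P' X = \<infinity> \<longrightarrow> \<gamma>' X \<ge> 0"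
          using other aY0 by (force simp: \<gamma>'_def \<gamma>_def)
        have am: "\<forall>X\<in>T. P' X = -\<infinity> \<longrightarrow> \<gamma>' X \<le> 0"
          using other True by (force simp: \<gamma>'_def)
        show False using L_inf[OF cohP T z' ap am, of Y] aY0 inf by (simp add: T_def \<gamma>'_def \<gamma>_def)
      next
        case False
        have ap: "\<forall>X\<in>T. P' X = \<infinity> \<longrightarrow> \<gamma> X \<ge> 0"
          using other False by force
        have am: "\<forall>X\<in>T. P' X = -\<infinity> \<longrightarrow> \<gamma> X \<le> 0"
          using other aY0 by (force simp: \<gamma>_def)
        show False using L_inf[OF cohP T z ap am, of Y] aY0 inf by (simp add: T_def \<gamma>_def)
      qed
    qed
    have fin: "\<forall>X\<in>T. \<gamma> X \<noteq> 0 \<longrightarrow> \<bar>P' X\<bar> \<noteq> \<infinity>"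
      using finY a0 PS by (auto simp: T_def \<gamma>_def a_def)
    have eq: "(\<Sum>X\<in>T. \<gamma> X * real_of_ereal (P' X)) = 0" by (rule L_eq[OF cohP T z fin])
    have "(\<Sum>X\<in>T. \<gamma> X * real_of_ereal (P' X)) = (\<Sum>X\<in>T. if X \<in> S then \<alpha> X * real_of_ereal (Q X) else 0) - (\<Sum>X\<in>T. if X = Y then real_of_ereal (P' X) else 0)"
      by (subst sum_subtractf[symmetric], rule sum.cong) (auto simp: \<gamma>_def a_def left_diff_distrib PS)
    also have "(\<Sum>X\<in>T. if X \<in> S then \<alpha> X * real_of_ereal (Q X) else 0) = (\<Sum>X\<in>S. \<alpha> X * real_of_ereal (Q X))"
      using ext_sum[OF T(1), of S "\<lambda>X. \<alpha> X * real_of_ereal (Q X)"] by (simp add: T_def subset_insertI)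
    also have "(\<Sum>X\<in>T. if X = Y then real_of_ereal (P' X) else 0) = real_of_ereal (P' Y)"
      using T(1) by (simp add: T_def)
    finally have "real_of_ereal (P' Y) = (\<Sum>X\<in>S. \<alpha> X * real_of_ereal (Q X))" using eq by simp
    then show ?thesis using H finY by (metis ereal_real')
  qed
qed



lemma choose_d:
  fixes Q :: "'a \<Rightarrow> ereal"
  assumes T: "finite T" and X0: "X0 \<in> T" "\<beta> X0 \<noteq> 0" "\<bar>Q X0\<bar> = \<infinity>"
  shows "\<exists>d. (\<forall>X\<in>T. \<bar>Q X\<bar> \<noteq> \<infinity> \<longrightarrow> ereal (d X) = Q X) \<and> (\<Sum>X\<in>T. \<beta> X * d X) = v"
proof -
  define r where "r = (\<Sum>X\<in>T-{X0}. \<beta> X * real_of_ereal (Q X))"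
  define d where "d = (\<lambda>X. if X = X0 then (v - r) / \<beta> X0 else real_of_ereal (Q X))"
  have c: "\<forall>X\<in>T. \<bar>Q X\<bar> \<noteq> \<infinity> \<longrightarrow> ereal (d X) = Q X"
    using X0 by (auto simp: d_def ereal_real')
  have "(\<Sum>X\<in>T. \<beta> X * d X) = \<beta> X0 * d X0 + (\<Sum>X\<in>T-{X0}. \<beta> X * d X)"
    using X0 T by (simp add: sum.remove)
  also have "(\<Sum>X\<in>T-{X0}. \<beta> X * d X) = r"
    unfolding r_def by (rule sum.cong) (auto simp: d_def)
  also have "\<beta> X0 * d X0 = v - r" using X0 by (simp add: d_def)
  finally show ?thesis using c by auto
qed

lemma coh_main:
  assumes coh: "coherent1 D Q"
    and Prep: "\<forall>Y S \<alpha>. is_rep D Q Y S \<alpha> \<longrightarrow> P Y = lin_sum S \<alpha> Q"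
  shows "coherent1 (lin_dom D Q) P"
  unfolding coherent1_def
proof (intro allI impI, elim conjE)
  fix S :: "('a \<Rightarrow> real) set" and \<alpha> c :: "('a \<Rightarrow> real) \<Rightarrow> real"
  assume S: "finite S" "S \<subseteq> lin_dom D Q"
    and ap: "\<forall>X\<in>S. P X = \<infinity> \<longrightarrow> 0 \<le> \<alpha> X"
    and am: "\<forall>X\<in>S. P X = - \<infinity> \<longrightarrow> \<alpha> X \<le> 0"
    and cP: "\<forall>X\<in>S. \<bar>P X\<bar> \<noteq> \<infinity> \<longrightarrow> ereal (c X) = P X"
  have "\<forall>Y\<in>S. \<exists>p. is_rep D Q Y (fst p) (snd p)"
    using S(2) by (auto simp: lin_dom_def)
  then obtain p where p: "\<forall>Y\<in>S. is_rep D Q Y (fst (p Y)) (snd (p Y))"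
    by (metis bchoice)
  define R where "R = (\<lambda>Y. fst (p Y))"
  define A where "A = (\<lambda>Y. snd (p Y))"
  have rep: "\<And>Y. Y \<in> S \<Longrightarrow> is_rep D Q Y (R Y) (A Y)" using p by (simp add: R_def A_def)
  have rf: "\<And>Y. Y \<in> S \<Longrightarrow> finite (R Y) \<and> R Y \<subseteq> D \<and> Y = (\<lambda>\<omega>. \<Sum>X\<in>R Y. A Y X * X \<omega>) \<and> wd_sum (R Y) (A Y) Q"
    using rep by (simp add: is_rep_def)
  have PY: "\<And>Y. Y \<in> S \<Longrightarrow> P Y = lin_sum (R Y) (A Y) Q" using rep Prep by blast
  define T where "T = (\<Union>Y\<in>S. R Y)"
  have T: "finite T" "T \<subseteq> D" using S(1) rf by (auto simp: T_def)
  have RT: "\<And>Y. Y \<in> S \<Longrightarrow> R Y \<subseteq> T" by (auto simp: T_def)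
  define a where "a = (\<lambda>Y X. if X \<in> R Y then A Y X else 0)"
  define \<beta> where "\<beta> = (\<lambda>X. \<Sum>Y\<in>S. \<alpha> Y * a Y X)"
  have e: "\<And>Y (g :: ('a \<Rightarrow> real) \<Rightarrow> real). Y \<in> S \<Longrightarrow> (\<Sum>X\<in>R Y. A Y X * g X) = (\<Sum>X\<in>T. a Y X * g X)"
  proof -
    fix Y and g :: "('a \<Rightarrow> real) \<Rightarrow> real" assume Y: "Y \<in> S"
    have "(\<Sum>X\<in>T. a Y X * g X) = (\<Sum>X\<in>T. if X \<in> R Y then A Y X * g X else 0)"
      by (rule sum.cong) (auto simp: a_def)
    then show "(\<Sum>X\<in>R Y. A Y X * g X) = (\<Sum>X\<in>T. a Y X * g X)"
      using ext_sum[OF T(1) RT[OF Y], of "\<lambda>X. A Y X * g X"] by simp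
  qed
  have Yw: "\<And>Y \<omega>. Y \<in> S \<Longrightarrow> Y \<omega> = (\<Sum>X\<in>T. a Y X * X \<omega>)"
  proof -
    fix Y \<omega> assume Y: "Y \<in> S"
    have "Y \<omega> = (\<Sum>X\<in>R Y. A Y X * X \<omega>)" using rf[OF Y] by (metis (no_types, lifting))
    then show "Y \<omega> = (\<Sum>X\<in>T. a Y X * X \<omega>)" using e[OF Y, of "\<lambda>X. X \<omega>"] by simp
  qed
  have key: "\<And>\<omega>. (\<Sum>Y\<in>S. \<alpha> Y * (Y \<omega> - c Y)) = (\<Sum>X\<in>T. \<beta> X * X \<omega>) - (\<Sum>Y\<in>S. \<alpha> Y * c Y)"
  proof -
    fix \<omega>
    have "(\<Sum>Y\<in>S. \<alpha> Y * Y \<omega>) = (\<Sum>Y\<in>S. \<Sum>X\<in>T. \<alpha> Y * a Y X * X \<omega>)"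
      by (rule sum.cong) (auto simp: Yw sum_distrib_left mult.assoc)
    also have "\<dots> = (\<Sum>X\<in>T. \<beta> X * X \<omega>)"
      by (subst sum.swap) (simp add: \<beta>_def sum_distrib_right)
    finally show "(\<Sum>Y\<in>S. \<alpha> Y * (Y \<omega> - c Y)) = (\<Sum>X\<in>T. \<beta> X * X \<omega>) - (\<Sum>Y\<in>S. \<alpha> Y * c Y)"
      by (simp add: right_diff_distrib sum_subtractf)
  qed
  have sgn: "\<And>Y X. Y \<in> S \<Longrightarrow> X \<in> T \<Longrightarrow> (Q X = \<infinity> \<longrightarrow> \<alpha> Y * a Y X \<ge> 0) \<and> (Q X = -\<infinity> \<longrightarrow> \<alpha> Y * a Y X \<le> 0)"
  proof -
    fix Y X assume Y: "Y \<in> S" and X: "X \<in> T"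
    show "(Q X = \<infinity> \<longrightarrow> \<alpha> Y * a Y X \<ge> 0) \<and> (Q X = -\<infinity> \<longrightarrow> \<alpha> Y * a Y X \<le> 0)"
    proof (cases "X \<in> R Y")
      case False then show ?thesis by (simp add: a_def)
    next
      case True
      have fY: "finite (R Y)" "wd_sum (R Y) (A Y) Q" using rf[OF Y] by auto
      consider "A Y X > 0" | "A Y X < 0" | "A Y X = 0" by linarith
      then show ?thesis
      proof cases
        case 1
        have i1: "Q X = \<infinity> \<Longrightarrow> P Y = \<infinity>" using H1[OF fY True] PY[OF Y] 1 by simp
        have i2: "Q X = -\<infinity> \<Longrightarrow> P Y = -\<infinity>" using H2[OF fY True] PY[OF Y] 1 by simp
        show ?thesis using i1 i2 ap am Y 1 True by (auto simp: a_def mult_nonneg_nonneg mult_nonpos_nonneg)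
      next
        case 2
        have i1: "Q X = \<infinity> \<Longrightarrow> P Y = -\<infinity>" using H2[OF fY True] PY[OF Y] 2 by simp
        have i2: "Q X = -\<infinity> \<Longrightarrow> P Y = \<infinity>" using H1[OF fY True] PY[OF Y] 2 by simp
        show ?thesis using i1 i2 ap am Y 2 True by (auto simp: a_def mult_nonpos_nonpos mult_nonneg_nonpos)
      next
        case 3 then show ?thesis by (simp add: a_def)
      qed
    qed
  qed
  have bp: "\<forall>X\<in>T. Q X = \<infinity> \<longrightarrow> 0 \<le> \<beta> X"
    using sgn by (auto simp: \<beta>_def intro!: sum_nonneg)
  have bm: "\<forall>X\<in>T. Q X = -\<infinity> \<longrightarrow> \<beta> X \<le> 0"
    using sgn by (auto simp: \<beta>_def intro!: sum_nonpos)
  have dex: "\<exists>d. (\<forall>X\<in>T. \<bar>Q X\<bar> \<noteq> \<infinity> \<longrightarrow> ereal (d X) = Q X) \<and> (\<Sum>X\<in>T. \<beta> X * d X) = (\<Sum>Y\<in>S. \<alpha> Y * c Y)"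
  proof (cases "\<exists>Y0\<in>S. \<alpha> Y0 \<noteq> 0 \<and> \<bar>P Y0\<bar> = \<infinity>")
    case True
    then obtain Y0 where Y0: "Y0 \<in> S" "\<alpha> Y0 \<noteq> 0" "\<bar>P Y0\<bar> = \<infinity>" by auto
    have fY: "finite (R Y0)" "wd_sum (R Y0) (A Y0) Q" using rf[OF Y0(1)] by auto
    have "\<exists>X0\<in>T. \<bar>Q X0\<bar> = \<infinity> \<and> \<beta> X0 \<noteq> 0"
    proof (cases "P Y0 = \<infinity>")
      case True
      then obtain X0 where X0: "X0 \<in> R Y0" "ereal (A Y0 X0) * Q X0 = \<infinity>"
        using H3[OF fY] PY[OF Y0(1)] by auto
      have aY0: "\<alpha> Y0 > 0" using ap Y0 True by force
      have X0T: "X0 \<in> T" using RT[OF Y0(1)] X0 by auto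
      show ?thesis
      proof (cases "Q X0 = \<infinity>")
        case True
        then have "A Y0 X0 > 0" using X0 by (auto split: if_splits)
        then have "\<alpha> Y0 * a Y0 X0 > 0" using aY0 X0 by (simp add: a_def)
        then have "\<beta> X0 > 0" unfolding \<beta>_def
          by (rule sum_pos2[OF S(1) Y0(1)]) (use sgn X0T True in auto)
        then show ?thesis using X0T True by force
      next
        case False
        then have q: "Q X0 = -\<infinity>" "A Y0 X0 < 0" using X0 by (auto split: if_splits)
        then have "- (\<alpha> Y0 * a Y0 X0) > 0" using aY0 X0 by (simp add: a_def mult_pos_neg)
        then have "(\<Sum>Y\<in>S. - (\<alpha> Y * a Y X0)) > 0"
          by (rule sum_pos2[OF S(1) Y0(1)]) (use sgn X0T q in force)
        then have "\<beta> X0 < 0" by (simp add: \<beta>_def sum_negf)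
        then show ?thesis using X0T q by force
      qed
    next
      case False
      then have Pm: "P Y0 = -\<infinity>" using Y0 by auto
      then obtain X0 where X0: "X0 \<in> R Y0" "ereal (A Y0 X0) * Q X0 = -\<infinity>"
        using H4[OF fY] PY[OF Y0(1)] by auto
      have aY0: "\<alpha> Y0 < 0" using am Y0 Pm by force
      have X0T: "X0 \<in> T" using RT[OF Y0(1)] X0 by auto
      show ?thesis
      proof (cases "Q X0 = \<infinity>")
        case True
        then have "A Y0 X0 < 0" using X0 by (auto split: if_splits)
        then have "\<alpha> Y0 * a Y0 X0 > 0" using aY0 X0 by (simp add: a_def mult_neg_neg)
        then have "\<beta> X0 > 0" unfolding \<beta>_def
          by (rule sum_pos2[OF S(1) Y0(1)]) (use sgn X0T True in auto)
        then show ?thesis using X0T True by force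
      next
        case False
        then have q: "Q X0 = -\<infinity>" "A Y0 X0 > 0" using X0 by (auto split: if_splits)
        then have "- (\<alpha> Y0 * a Y0 X0) > 0" using aY0 X0 by (simp add: a_def mult_neg_pos)
        then have "(\<Sum>Y\<in>S. - (\<alpha> Y * a Y X0)) > 0"
          by (rule sum_pos2[OF S(1) Y0(1)]) (use sgn X0T q in force)
        then have "\<beta> X0 < 0" by (simp add: \<beta>_def sum_negf)
        then show ?thesis using X0T q by force
      qed
    qed
    then obtain X0 where X0: "X0 \<in> T" "\<bar>Q X0\<bar> = \<infinity>" "\<beta> X0 \<noteq> 0" by auto
    show ?thesis by (rule choose_d[where Q=Q and \<beta>=\<beta>, OF T(1) X0(1) X0(3) X0(2)])
  next
    case False
    have cY: "\<And>Y. Y \<in> S \<Longrightarrow> \<alpha> Y * c Y = \<alpha> Y * (\<Sum>X\<in>T. a Y X * real_of_ereal (Q X))"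
    proof -
      fix Y assume Y: "Y \<in> S"
      show "\<alpha> Y * c Y = \<alpha> Y * (\<Sum>X\<in>T. a Y X * real_of_ereal (Q X))"
      proof (cases "\<alpha> Y = 0")
        case True then show ?thesis by simp
      next
        case nz: False
        then have fin: "\<bar>P Y\<bar> \<noteq> \<infinity>" using False Y by auto
        have fY: "finite (R Y)" "wd_sum (R Y) (A Y) Q" using rf[OF Y] by auto
        have "lin_sum (R Y) (A Y) Q \<noteq> \<infinity>" "lin_sum (R Y) (A Y) Q \<noteq> -\<infinity>" using fin PY[OF Y] by auto
        note H = H5[OF fY this]
        have "ereal (c Y) = ereal (\<Sum>X\<in>T. a Y X * real_of_ereal (Q X))"
          using cP Y fin PY[OF Y] H e[OF Y, of "\<lambda>X. real_of_ereal (Q X)"] by simp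
        then show ?thesis by simp
      qed
    qed
    have "(\<Sum>Y\<in>S. \<alpha> Y * c Y) = (\<Sum>Y\<in>S. \<Sum>X\<in>T. \<alpha> Y * a Y X * real_of_ereal (Q X))"
      by (rule sum.cong) (auto simp: cY sum_distrib_left mult.assoc)
    also have "\<dots> = (\<Sum>X\<in>T. \<beta> X * real_of_ereal (Q X))"
      by (subst sum.swap) (simp add: \<beta>_def sum_distrib_right)
    finally show ?thesis by (intro exI[of _ "\<lambda>X. real_of_ereal (Q X)"]) (auto simp: ereal_real')
  qed
  then obtain d where d: "\<forall>X\<in>T. \<bar>Q X\<bar> \<noteq> \<infinity> \<longrightarrow> ereal (d X) = Q X"
    and dsum: "(\<Sum>X\<in>T. \<beta> X * d X) = (\<Sum>Y\<in>S. \<alpha> Y * c Y)" by auto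
  have "0 \<le> (SUP \<omega>. ereal (\<Sum>X\<in>T. \<beta> X * (X \<omega> - d X)))"
    using coh[unfolded coherent1_def, rule_format, of T \<beta> d] T bp bm d by auto
  also have "\<dots> \<le> (SUP \<omega>. ereal (\<Sum>Y\<in>S. \<alpha> Y * (Y \<omega> - c Y)))"
  proof (rule SUP_mono')
    fix \<omega>
    have "(\<Sum>X\<in>T. \<beta> X * (X \<omega> - d X)) = (\<Sum>X\<in>T. \<beta> X * X \<omega>) - (\<Sum>X\<in>T. \<beta> X * d X)"
      by (simp add: right_diff_distrib sum_subtractf)
    then show "ereal (\<Sum>X\<in>T. \<beta> X * (X \<omega> - d X)) \<le> ereal (\<Sum>Y\<in>S. \<alpha> Y * (Y \<omega> - c Y))"
      using key[of \<omega>] dsum by simp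
  qed
  finally show "0 \<le> (SUP \<omega>. ereal (\<Sum>Y\<in>S. \<alpha> Y * (Y \<omega> - c Y)))" .
qed


theorem lemma5p3:
  fixes D :: "('w \<Rightarrow> real) set" and Q :: "('w \<Rightarrow> real) \<Rightarrow> ereal"
  assumes const_in: "\<And>c::real. (\<lambda>_. c) \<in> D"
    and coh: "coherent1 D Q"
  shows "(\<forall>Y S1 \<alpha>1 S2 \<alpha>2. is_rep D Q Y S1 \<alpha>1 \<and> is_rep D Q Y S2 \<alpha>2
            \<longrightarrow> lin_sum S1 \<alpha>1 Q = lin_sum S2 \<alpha>2 Q)
       \<and> (\<exists>P. (\<forall>Y S \<alpha>. is_rep D Q Y S \<alpha> \<longrightarrow> P Y = lin_sum S \<alpha> Q)
              \<and> (\<forall>X\<in>D. P X = Q X)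
              \<and> coherent1 (lin_dom D Q) P
              \<and> (\<forall>P'. coherent1 (lin_dom D Q) P' \<and> (\<forall>X\<in>D. P' X = Q X)
                     \<longrightarrow> (\<forall>Y\<in>lin_dom D Q. P' Y = P Y)))"
proof -
  have WD: "\<forall>Y S1 \<alpha>1 S2 \<alpha>2. is_rep D Q Y S1 \<alpha>1 \<and> is_rep D Q Y S2 \<alpha>2
            \<longrightarrow> lin_sum S1 \<alpha>1 Q = lin_sum S2 \<alpha>2 Q"
    using wd_main[OF coh] by blast
  define P where "P = (\<lambda>Y. SOME v. \<exists>S \<alpha>. is_rep D Q Y S \<alpha> \<and> v = lin_sum S \<alpha> Q)"
  have Prep: "\<forall>Y S \<alpha>. is_rep D Q Y S \<alpha> \<longrightarrow> P Y = lin_sum S \<alpha> Q"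
  proof (intro allI impI)
    fix Y S \<alpha> assume r: "is_rep D Q Y S \<alpha>"
    have "\<exists>S' \<alpha>'. is_rep D Q Y S' \<alpha>' \<and> P Y = lin_sum S' \<alpha>' Q"
      unfolding P_def by (rule someI[of _ "lin_sum S \<alpha> Q"]) (use r in blast)
    then obtain S' \<alpha>' where r': "is_rep D Q Y S' \<alpha>'" "P Y = lin_sum S' \<alpha>' Q" by blast
    show "P Y = lin_sum S \<alpha> Q" using r'(2) wd_main[OF coh r' (1) r] by simp
  qed
  have PD: "\<forall>X\<in>D. P X = Q X"
  proof
    fix X assume "X \<in> D"
    then have "is_rep D Q X {X} (\<lambda>_. 1)" by (auto simp: is_rep_def wd_sum_def)
    then show "P X = Q X" using Prep by (simp add: lin_sum_def)
  qed
  have PC: "coherent1 (lin_dom D Q) P" by (rule coh_main[OF coh Prep])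
  have U: "\<forall>P'. coherent1 (lin_dom D Q) P' \<and> (\<forall>X\<in>D. P' X = Q X)
                     \<longrightarrow> (\<forall>Y\<in>lin_dom D Q. P' Y = P Y)"
  proof (intro allI impI ballI, elim conjE)
    fix P' Y assume c: "coherent1 (lin_dom D Q) P'" and ag: "\<forall>X\<in>D. P' X = Q X"
      and Y: "Y \<in> lin_dom D Q"
    then obtain S \<alpha> where r: "is_rep D Q Y S \<alpha>" by (auto simp: lin_dom_def)
    show "P' Y = P Y" using unique_main[OF c ag r] Prep r by simp
  qed
  show ?thesis
    apply (rule conjI[OF WD])
    apply (rule exI[of _ P])
    apply (intro conjI)
       apply (fact Prep)
      apply (fact PD)
     apply (fact PC)
    apply (fact U)
    done
qed

end
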